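(* If $\bar c>q\sigma^2/(2\mu)$, there exists a unique $\bar z>0$ such that $\partial_xb_0(\bar z,\bar c)=0$. Moreover $\partial_xb_0(x,\bar c)<0$ for $x\in(0,\bar z)$ (and $\lim_{x\to0^+}\partial_xb_0(x,\bar c)<0$), $\partial_xb_0(x,\bar c)>0$ for $x\in(\bar z,\infty)$, and $\partial_{xx}b_0(\bar z,\bar c)>0$.
   Context: Fix constants $\mu>0$, $\sigma>0$, $q>0$. For $c\ge0$, $\theta_1(c)=\frac{c-\mu+\sqrt{(c-\mu)^2+2q\sigma^2}}{\sigma^2}>0$, $\theta_2(c)=\frac{c-\mu-\sqrt{(c-\mu)^2+2q\sigma^2}}{\sigma^2}<0$, with $\theta_2'$ its derivative. For $x>0$, $b_0(x,c)=\dfrac{-\frac1q(1-e^{\theta_2(c)x})+\frac cq\theta_2'(c)e^{\theta_2(c)x}x}{e^{\theta_1(c)x}-e^{\theta_2(c)x}}$. *)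

theory Defs
  imports "HOL-Analysis.Analysis"
begin

definition theta1 :: "real \<Rightarrow> real \<Rightarrow> real \<Rightarrow> real \<Rightarrow> real" where
  "theta1 mu sg q c = (c - mu + sqrt ((c - mu)^2 + 2 * q * sg^2)) / sg^2"

definition theta2 :: "real \<Rightarrow> real \<Rightarrow> real \<Rightarrow> real \<Rightarrow> real" where
  "theta2 mu sg q c = (c - mu - sqrt ((c - mu)^2 + 2 * q * sg^2)) / sg^2"

definition b0 :: "real \<Rightarrow> real \<Rightarrow> real \<Rightarrow> real \<Rightarrow> real \<Rightarrow> real" where
  "b0 mu sg q x c =
     (-(1/q) * (1 - exp (theta2 mu sg q c * x))
      + (c/q) * deriv (theta2 mu sg q) c * exp (theta2 mu sg q c * x) * x)
     / (exp (theta1 mu sg q c * x) - exp (theta2 mu sg q c * x))"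

end

theory Submission
  imports Defs
begin

lemma sign_pattern:
  fixes f f' :: "real \<Rightarrow> real" and x0 \<delta> :: real
  assumes der: "\<And>x. x \<ge> 0 \<Longrightarrow> (f has_real_derivative f' x) (at x)"
    and x0: "x0 \<ge> 0"
    and neg: "\<And>x. 0 < x \<Longrightarrow> x < x0 \<Longrightarrow> f' x < 0"
    and pos: "\<And>x. x > x0 \<Longrightarrow> f' x > 0"
    and f0: "f 0 \<le> 0" and f0': "x0 > 0 \<or> f 0 < 0"
    and dpos: "\<delta> > 0" and dlow: "\<And>x. x \<ge> x0 + 1 \<Longrightarrow> f' x \<ge> \<delta>"
  shows "\<exists>z>x0. f z = 0 \<and> (\<forall>x. 0 < x \<and> x < z \<longrightarrow> f x < 0) \<and> (\<forall>x. x > z \<longrightarrow> f x > 0)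
           \<and> (\<forall>x y. x0 \<le> x \<longrightarrow> x \<le> y \<longrightarrow> f x \<le> f y)"
proof -
  have dec: "f x < f 0" if h: "0 < x" "x \<le> x0" for x
  proof -
    obtain \<xi> where "0 < \<xi>" "\<xi> < x" "f x - f 0 = (x - 0) * f' \<xi>"
      using MVT2[of 0 x f f'] h der by auto
    moreover have "f' \<xi> < 0" using neg \<open>0 < \<xi>\<close> \<open>\<xi> < x\<close> that by auto
    moreover have "x * f' \<xi> < 0" using h \<open>f' \<xi> < 0\<close> by (simp add: mult_pos_neg)
    ultimately show ?thesis by simp
  qed
  have inc: "f x < f y" if h: "x0 \<le> x" "x < y" for x y
  proof -
    obtain \<xi> where "x < \<xi>" "\<xi> < y" "f y - f x = (y - x) * f' \<xi>"
      using MVT2[of x y f f'] h der x0 by auto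
    moreover have "f' \<xi> > 0" using pos \<open>x < \<xi>\<close> that by auto
    moreover have "(y - x) * f' \<xi> > 0" using h \<open>f' \<xi> > 0\<close> by simp
    ultimately show ?thesis by linarith
  qed
  have fx0: "f x0 < 0"
    using f0' dec[of x0] f0 x0 by (cases "x0 = 0") auto
  define X0 where "X0 = x0 + 1"
  define X where "X = X0 + (\<bar>f X0\<bar> / \<delta> + 1)"
  have nn: "0 \<le> \<bar>f X0\<bar> / \<delta>" using dpos by simp
  have "f X - f X0 \<ge> (X - X0) * \<delta>"
  proof -
    have "X0 < X" unfolding X_def using nn by linarith
    then obtain \<xi> where "X0 < \<xi>" "\<xi> < X" "f X - f X0 = (X - X0) * f' \<xi>"
      using MVT2[of X0 X f f'] der x0 unfolding X0_def by auto
    moreover have "f' \<xi> \<ge> \<delta>" using dlow \<open>X0 < \<xi>\<close> unfolding X0_def by auto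
    ultimately show ?thesis using \<open>X0 < X\<close> by (simp add: mult_left_mono)
  qed
  moreover have "(X - X0) * \<delta> = \<bar>f X0\<bar> + \<delta>" unfolding X_def using dpos by (simp add: field_simps)
  ultimately have fX: "f X > 0" using dpos by linarith
  have "x0 \<le> X" unfolding X_def using nn X0_def by linarith
  have cont: "continuous_on {x0..X} f"
    by (rule continuous_at_imp_continuous_on) (meson DERIV_isCont atLeastAtMost_iff der order_trans x0)
  obtain z where z: "x0 \<le> z" "z \<le> X" "f z = 0"
    using IVT'[of f x0 0 X, OF _ _ \<open>x0 \<le> X\<close> cont] fx0 fX by auto
  have "z > x0" using z fx0 by (cases "z = x0") auto
  show ?thesis
  proof (intro exI[of _ z] conjI allI impI)
    show "z > x0" by fact
    show "f z = 0" by fact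
    fix x assume "0 < x \<and> x < z"
    then show "f x < 0"
      using dec[of x] inc[of x z] f0 z by (cases "x \<le> x0") auto
  next
    fix x assume "x > z" then show "f x > 0" using inc[of z x] z \<open>z > x0\<close> by auto
  next
    fix x y assume "x0 \<le> x" "x \<le> y" then show "f x \<le> f y" using inc[of x y] by (cases "x = y") auto
  qed
qed

definition Qf :: "real \<Rightarrow> real \<Rightarrow> real \<Rightarrow> real \<Rightarrow> real" where
  "Qf a b k x = a*(a+2*b)*exp(b*x) - (a+b)*k - (a+b)*a - (a+b)*a*k*x"
definition Qd :: "real \<Rightarrow> real \<Rightarrow> real \<Rightarrow> real \<Rightarrow> real" where
  "Qd a b k x = a*b*(a+2*b)*exp(b*x) - (a+b)*a*k"
definition Pf :: "real \<Rightarrow> real \<Rightarrow> real \<Rightarrow> real \<Rightarrow> real" where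
  "Pf a b k x = a*(a+2*b)*exp((a+b)*x) - (a+b)^2*(1+k*x)*exp(a*x) + b^2"
definition Ff :: "real \<Rightarrow> real \<Rightarrow> real \<Rightarrow> real \<Rightarrow> real" where
  "Ff a b k x = a*exp((a+2*b)*x) + (k - (a+b) - (a+b)*k*x)*exp((a+b)*x) + b*exp(b*x) - k"
definition F2 :: "real \<Rightarrow> real \<Rightarrow> real \<Rightarrow> real \<Rightarrow> real" where
  "F2 a b k x = a*(a+2*b)^2*exp((a+2*b)*x) - (a+b)^3*(1+k*x)*exp((a+b)*x)
     - (a+b)^2*k*exp((a+b)*x) + b^3*exp(b*x)"

lemma exp_ab: "exp((a+b)*(x::real)) = exp(a*x)*exp(b*x)"
  by (simp add: mult_exp_exp distrib_right)
lemma exp_a2b: "exp((a+2*b)*(x::real)) = exp(a*x)*exp(b*x)*exp(b*x)"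
  by (simp add: mult_exp_exp algebra_simps)

lemma Qf_deriv: "(Qf a b k has_real_derivative Qd a b k x) (at x)"
  unfolding Qf_def[abs_def] Qd_def
  by (auto intro!: derivative_eq_intros simp: algebra_simps)

lemma Pf_deriv: "(Pf a b k has_real_derivative (a+b)*exp(a*x)*Qf a b k x) (at x)"
  unfolding Pf_def[abs_def] Qf_def
  by (rule derivative_eq_intros refl)+ ((simp only: exp_a2b)?, (simp only: exp_ab)?, algebra)

lemma Ff_deriv: "(Ff a b k has_real_derivative exp(b*x)*Pf a b k x) (at x)"
  unfolding Ff_def[abs_def] Pf_def
  by (rule derivative_eq_intros refl)+ ((simp only: exp_a2b)?, (simp only: exp_ab)?, algebra)

lemma Fd_deriv: "((\<lambda>x. exp(b*x)*Pf a b k x) has_real_derivative F2 a b k x) (at x)"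
  unfolding Pf_def F2_def
  by (rule derivative_eq_intros refl)+ ((simp only: exp_a2b)?, (simp only: exp_ab)?, algebra)


lemma core_signs:
  fixes a b k :: real
  assumes a: "a > 0" and b: "b > 0" and k: "k > 0" and ab: "a*b < (a+b)*k"
  shows "\<exists>z>0. Ff a b k z = 0 \<and> (\<forall>x. 0 < x \<and> x < z \<longrightarrow> Ff a b k x < 0)
            \<and> (\<forall>x. x > z \<longrightarrow> Ff a b k x > 0) \<and> exp(b*z) * Pf a b k z > 0"
proof -
  define r where "r = (a+b)*k/(b*(a+2*b))"
  have r: "r > 0" unfolding r_def using a b k by simp
  define x0 where "x0 = max 0 (ln r / b)"
  have x0: "x0 \<ge> 0" unfolding x0_def by simp
  have rr: "a*b*(a+2*b)*r = (a+b)*a*k"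
  proof -
    have "b*(a+2*b) \<noteq> 0" using a b by simp
    then show ?thesis unfolding r_def by (simp add: field_simps)
  qed
  have Qd_eq: "Qd a b k x = a*b*(a+2*b)*(exp(b*x) - r)" for x
    unfolding Qd_def using rr by (simp add: right_diff_distrib) (metis mult.commute)
  have abpos: "a*b*(a+2*b) > 0" using a b by simp
  have Qneg: "Qd a b k x < 0" if "0 < x" "x < x0" for x
  proof -
    have "x0 = ln r / b" using that unfolding x0_def by (auto simp: max_def split: if_splits)
    then have "b*x < ln r" using that b by (simp add: field_simps) (metis mult_strict_left_mono)
    then have "exp(b*x) < exp (ln r)" by simp
    then have "exp(b*x) < r" using r by simp
    then show ?thesis unfolding Qd_eq using abpos by (simp add: mult_pos_neg)
  qed
  have Qpos: "Qd a b k x > 0" if "x > x0" for x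
  proof -
    have "x > ln r / b" using that unfolding x0_def by simp
    then have "b*x > ln r" using b by (simp add: field_simps)
    then have "exp(b*x) > exp (ln r)" by simp
    then have "exp(b*x) > r" using r by simp
    then show ?thesis unfolding Qd_eq using abpos by simp
  qed
  have Qlow: "Qd a b k x \<ge> Qd a b k (x0+1)" if "x \<ge> x0 + 1" for x
  proof -
    have "exp(b*(x0+1)) \<le> exp(b*x)" using that b by simp
    then show ?thesis unfolding Qd_eq using abpos by (simp add: mult_left_mono)
  qed
  have Q0: "Qf a b k 0 < 0" using ab unfolding Qf_def by (simp add: algebra_simps)
  obtain x1 where x1: "x1 > x0" "Qf a b k x1 = 0" "\<forall>x. 0 < x \<and> x < x1 \<longrightarrow> Qf a b k x < 0"
     "\<forall>x. x > x1 \<longrightarrow> Qf a b k x > 0" "\<forall>x y. x0 \<le> x \<longrightarrow> x \<le> y \<longrightarrow> Qf a b k x \<le> Qf a b k y"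
    using sign_pattern[of "Qf a b k" "Qd a b k" x0 "Qd a b k (x0+1)", OF Qf_deriv x0 Qneg Qpos]
      Q0 Qlow Qpos[of "x0+1"] by force
  have x1pos: "x1 > 0" using x1 x0 by simp
  have ab0: "a + b > 0" using a b by simp
  have Pneg: "(a+b)*exp(a*x)*Qf a b k x < 0" if "0 < x" "x < x1" for x
    using x1(3) that ab0 by (simp add: mult_pos_neg)
  have Ppos: "(a+b)*exp(a*x)*Qf a b k x > 0" if "x > x1" for x
    using x1(4) that ab0 by simp
  have Qx11: "Qf a b k (x1+1) > 0" using x1(4) by simp
  have Plow: "(a+b)*exp(a*x)*Qf a b k x \<ge> (a+b)*Qf a b k (x1+1)" if "x \<ge> x1 + 1" for x
  proof -
    have "Qf a b k x \<ge> Qf a b k (x1+1)" using x1(5) x1(1) that x0 by auto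
    moreover have "exp(a*x) \<ge> 1" using a that x1pos by simp
    moreover have "Qf a b k x > 0" using x1(4) that by simp
    ultimately have "exp(a*x)*Qf a b k x \<ge> Qf a b k (x1+1)"
      by (metis mult_le_cancel_right1 order_trans less_le_not_le)
    then show ?thesis using ab0 by (simp add: mult.assoc mult_left_mono)
  qed
  have P0: "Pf a b k 0 = 0" unfolding Pf_def by (simp add: power2_eq_square algebra_simps)
  obtain x2 where x2: "x2 > x1" "Pf a b k x2 = 0" "\<forall>x. 0 < x \<and> x < x2 \<longrightarrow> Pf a b k x < 0"
     "\<forall>x. x > x2 \<longrightarrow> Pf a b k x > 0" "\<forall>x y. x1 \<le> x \<longrightarrow> x \<le> y \<longrightarrow> Pf a b k x \<le> Pf a b k y"
    using sign_pattern[of "Pf a b k" "\<lambda>x. (a+b)*exp(a*x)*Qf a b k x" x1 "(a+b)*Qf a b k (x1+1)",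
        OF Pf_deriv _ Pneg Ppos] x1pos P0 Qx11 ab0 Plow by force
  have x2pos: "x2 > 0" using x2 x1pos by simp
  have Fneg: "exp(b*x)*Pf a b k x < 0" if "0 < x" "x < x2" for x
    using x2(3) that by (simp add: mult_pos_neg)
  have Fpos: "exp(b*x)*Pf a b k x > 0" if "x > x2" for x
    using x2(4) that by simp
  have Px21: "Pf a b k (x2+1) > 0" using x2(4) by simp
  have Flow: "exp(b*x)*Pf a b k x \<ge> Pf a b k (x2+1)" if "x \<ge> x2 + 1" for x
  proof -
    have "Pf a b k x \<ge> Pf a b k (x2+1)" using x2(5) x2(1) that by auto
    moreover have "exp(b*x) \<ge> 1" using b that x2pos by simp
    moreover have "Pf a b k x > 0" using x2(4) that by simp
    ultimately show ?thesis
      by (metis mult_le_cancel_right1 order_trans less_le_not_le)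
  qed
  have F0: "Ff a b k 0 = 0" unfolding Ff_def by simp
  obtain z where z: "z > x2" "Ff a b k z = 0" "\<forall>x. 0 < x \<and> x < z \<longrightarrow> Ff a b k x < 0"
     "\<forall>x. x > z \<longrightarrow> Ff a b k x > 0"
    using sign_pattern[of "Ff a b k" "\<lambda>x. exp(b*x)*Pf a b k x" x2 "Pf a b k (x2+1)",
        OF Ff_deriv _ Fneg Fpos] x2pos F0 Px21 Flow by force
  show ?thesis
    using z x2pos Fpos[of z] by (intro exI[of _ z]) auto
qed


lemma core_limit:
  fixes a b k q :: real
  assumes ab0: "a + b > 0" and q: "q > 0"
  shows "((\<lambda>x. Ff a b k x / (q*(exp((a+b)*x)-1)^2)) \<longlongrightarrow> F2 a b k 0 / 2 / (q*(a+b)^2)) (at_right 0)"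
proof -
  have evpos: "\<forall>\<^sub>F x in at_right (0::real). x > 0" by (rule eventually_at_right_less)
  have L1: "((\<lambda>x. exp(b*x)*Pf a b k x / (2*x)) \<longlongrightarrow> F2 a b k 0 / 2) (at_right 0)"
  proof (rule lhopital_right_0[where f'="F2 a b k" and g'="\<lambda>x. 2"])
    show "((\<lambda>x. exp(b*x)*Pf a b k x) \<longlongrightarrow> 0) (at_right 0)"
      unfolding Pf_def by (auto intro!: tendsto_eq_intros simp: power2_eq_square algebra_simps)
    show "((\<lambda>x. 2*x) \<longlongrightarrow> 0) (at_right (0::real))"
      by (auto intro!: tendsto_eq_intros)
    show "\<forall>\<^sub>F x in at_right 0. 2*x \<noteq> (0::real)" using evpos by (rule eventually_mono) simp
    show "\<forall>\<^sub>F x in at_right 0. (2::real) \<noteq> 0" by simp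
    show "\<forall>\<^sub>F x in at_right 0. ((\<lambda>x. exp(b*x)*Pf a b k x) has_real_derivative F2 a b k x) (at x)"
      by (simp add: Fd_deriv)
    show "\<forall>\<^sub>F x in at_right 0. ((\<lambda>x. 2*x) has_real_derivative 2) (at x)"
      by (auto intro!: derivative_eq_intros)
    show "((\<lambda>x. F2 a b k x / 2) \<longlongrightarrow> F2 a b k 0 / 2) (at_right 0)"
      unfolding F2_def by (auto intro!: tendsto_eq_intros)
  qed
  have L2: "((\<lambda>x. Ff a b k x / x^2) \<longlongrightarrow> F2 a b k 0 / 2) (at_right 0)"
  proof (rule lhopital_right_0[where f'="\<lambda>x. exp(b*x)*Pf a b k x" and g'="\<lambda>x. 2*x"])
    show "(Ff a b k \<longlongrightarrow> 0) (at_right 0)"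
      unfolding Ff_def[abs_def] by (auto intro!: tendsto_eq_intros)
    show "((\<lambda>x. x^2) \<longlongrightarrow> 0) (at_right (0::real))"
      by (auto intro!: tendsto_eq_intros)
    show "\<forall>\<^sub>F x in at_right 0. x^2 \<noteq> (0::real)" using evpos by (rule eventually_mono) simp
    show "\<forall>\<^sub>F x in at_right 0. 2*x \<noteq> (0::real)" using evpos by (rule eventually_mono) simp
    show "\<forall>\<^sub>F x in at_right 0. (Ff a b k has_real_derivative exp(b*x)*Pf a b k x) (at x)"
      by (simp add: Ff_deriv)
    show "\<forall>\<^sub>F x in at_right 0. ((\<lambda>x. x^2) has_real_derivative 2*x) (at x)"
      by (intro always_eventually allI) (auto intro!: derivative_eq_intros)
    show "((\<lambda>x. exp(b*x)*Pf a b k x / (2*x)) \<longlongrightarrow> F2 a b k 0 / 2) (at_right 0)" by (rule L1)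
  qed
  have L3: "((\<lambda>x. (exp((a+b)*x)-1) / x) \<longlongrightarrow> a+b) (at_right 0)"
  proof (rule lhopital_right_0[where f'="\<lambda>x. (a+b)*exp((a+b)*x)" and g'="\<lambda>x. 1"])
    show "((\<lambda>x. exp((a+b)*x)-1) \<longlongrightarrow> 0) (at_right 0)"
      by (auto intro!: tendsto_eq_intros)
    show "((\<lambda>x. x) \<longlongrightarrow> 0) (at_right (0::real))"
      by (auto intro!: tendsto_eq_intros)
    show "\<forall>\<^sub>F x in at_right 0. x \<noteq> (0::real)" using evpos by (rule eventually_mono) simp
    show "\<forall>\<^sub>F x in at_right 0. (1::real) \<noteq> 0" by simp
    show "\<forall>\<^sub>F x in at_right 0. ((\<lambda>x. exp((a+b)*x)-1) has_real_derivative (a+b)*exp((a+b)*x)) (at x)"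
      by (intro always_eventually allI) (auto intro!: derivative_eq_intros)
    show "\<forall>\<^sub>F x in at_right 0. ((\<lambda>x. x) has_real_derivative 1) (at x)"
      by (intro always_eventually allI) (auto intro!: derivative_eq_intros)
    show "((\<lambda>x. (a+b)*exp((a+b)*x) / 1) \<longlongrightarrow> a+b) (at_right 0)"
      by (auto intro!: tendsto_eq_intros)
  qed
  have L4: "((\<lambda>x. (Ff a b k x / x^2) / (q * ((exp((a+b)*x)-1) / x)^2)) \<longlongrightarrow> F2 a b k 0 / 2 / (q*(a+b)^2)) (at_right 0)"
    using ab0 q by (intro tendsto_divide L2 tendsto_mult tendsto_const tendsto_power L3) auto
  show ?thesis
  proof (rule Lim_transform_eventually[OF L4])
    show "\<forall>\<^sub>F x in at_right 0. (Ff a b k x / x^2) / (q * ((exp((a+b)*x)-1) / x)^2) =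
        Ff a b k x / (q*(exp((a+b)*x)-1)^2)"
      using evpos by (rule eventually_mono) (simp add: power_divide)
  qed
qed


lemma Ff_alt:
  fixes a b k x :: real
  shows "(k - b*exp(b*x))*(exp((a+b)*x)-1) - (1+k*x-exp(b*x))*((a+b)*exp((a+b)*x)) = Ff a b k x"
  unfolding Ff_def by ((simp only: exp_a2b)?, (simp only: exp_ab)?, algebra)

lemma G_deriv:
  fixes a b k q x :: real
  assumes ab0: "a + b > 0" and q: "q > 0" and x: "x > 0"
  shows "((\<lambda>x. (1 + k*x - exp(b*x))/(q*(exp((a+b)*x)-1))) has_real_derivative
           Ff a b k x/(q*(exp((a+b)*x)-1)^2)) (at x)"
proof -
  have h: "exp((a+b)*x) - 1 > 0" using ab0 x by simp
  have "((\<lambda>x. (1 + k*x - exp(b*x))/(q*(exp((a+b)*x)-1))) has_real_derivative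
      ((k - b*exp(b*x))*(q*(exp((a+b)*x)-1)) - (1+k*x-exp(b*x))*(q*((a+b)*exp((a+b)*x))))
        / (q*(exp((a+b)*x)-1))^2) (at x)"
    using h q by (auto intro!: derivative_eq_intros simp: power2_eq_square algebra_simps)
  moreover have "((k - b*exp(b*x))*(q*(exp((a+b)*x)-1)) - (1+k*x-exp(b*x))*(q*((a+b)*exp((a+b)*x))))
        / (q*(exp((a+b)*x)-1))^2 = Ff a b k x/(q*(exp((a+b)*x)-1)^2)"
  proof -
    have "((k - b*exp(b*x))*(q*(exp((a+b)*x)-1)) - (1+k*x-exp(b*x))*(q*((a+b)*exp((a+b)*x))))
        = q * Ff a b k x" by (subst Ff_alt[symmetric]) (simp add: algebra_simps)
    then show ?thesis using q h by (simp add: power2_eq_square)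
  qed
  ultimately show ?thesis by simp
qed

lemma aux_cancel: "(y::real) \<noteq> 0 \<Longrightarrow> (x*y - 0*w)/y^2 = x/y"
  by (simp add: power2_eq_square)

lemma R_deriv:
  fixes a b k q z :: real
  assumes ab0: "a + b > 0" and q: "q > 0" and z: "z > 0" and Fz: "Ff a b k z = 0"
  shows "((\<lambda>x. Ff a b k x/(q*(exp((a+b)*x)-1)^2)) has_real_derivative
           exp(b*z)*Pf a b k z/(q*(exp((a+b)*z)-1)^2)) (at z)"
proof -
  have h: "exp((a+b)*z) - 1 > 0" using ab0 z by simp
  have "((\<lambda>x. Ff a b k x/(q*(exp((a+b)*x)-1)^2)) has_real_derivative
      (exp(b*z)*Pf a b k z * (q*(exp((a+b)*z)-1)^2) - Ff a b k z * (q*(2*(exp((a+b)*z)-1)*((a+b)*exp((a+b)*z)))))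
        / (q*(exp((a+b)*z)-1)^2)^2) (at z)"
    using h q by (auto intro!: derivative_eq_intros Ff_deriv) (simp add: algebra_simps power2_eq_square)
  moreover have qh: "q*(exp((a+b)*z)-1)^2 \<noteq> 0" using h q ab0 z by simp
  ultimately show ?thesis unfolding Fz aux_cancel[OF qh] by blast
qed


lemma b0_alg:
  fixes A E q c d x :: real
  assumes "E > 0" "A*E - 1 \<noteq> 0" "q \<noteq> 0"
  shows "(-(1/q)*(1 - 1/E) + (c/q)*d*(1/E)*x)/(A - 1/E) = (1 + c*d*x - E)/(q*(A*E-1))"
proof -
  have "A - 1/E = (A*E - 1)/E" using assms by (simp add: field_simps)
  moreover have "-(1/q)*(1 - 1/E) + (c/q)*d*(1/E)*x = (1 + c*d*x - E)/(q*E)"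
    using assms by (simp add: field_simps)
  ultimately show ?thesis using assms by (simp add: field_simps)
qed

theorem mainTheorem16:
  fixes mu sg q cbar :: real
  assumes "mu > 0" and "sg > 0" and "q > 0"
    and "cbar > q * sg^2 / (2 * mu)"
  shows "(\<exists>!z. z > 0 \<and> deriv (\<lambda>x. b0 mu sg q x cbar) z = 0)
       \<and> (\<exists>z > 0. deriv (\<lambda>x. b0 mu sg q x cbar) z = 0
           \<and> (\<forall>x. 0 < x \<and> x < z \<longrightarrow> deriv (\<lambda>y. b0 mu sg q y cbar) x < 0)
           \<and> (\<exists>L. ((\<lambda>x. deriv (\<lambda>y. b0 mu sg q y cbar) x) \<longlongrightarrow> L) (at_right 0) \<and> L < 0)
           \<and> (\<forall>x. x > z \<longrightarrow> deriv (\<lambda>y. b0 mu sg q y cbar) x > 0)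
           \<and> deriv (\<lambda>x. deriv (\<lambda>y. b0 mu sg q y cbar) x) z > 0)"
proof -
  note mu = assms(1) and sg = assms(2) and q = assms(3) and cb = assms(4)
  define u where "u = cbar - mu"
  define S where "S = sqrt(u^2 + 2*q * sg^2)"
  have sg2: "sg^2 > 0" using sg by simp
  have qs: "2*q * sg^2 > 0" using q sg by simp
  have S2: "S^2 = u^2 + 2*q * sg^2" unfolding S_def using qs
    by (simp add: add_nonneg_pos less_imp_le)
  have Su: "S > \<bar>u\<bar>" unfolding S_def using qs real_sqrt_less_mono[of "u^2" "u^2+2*q * sg^2"] by simp
  have Spos: "S > 0" using Su by linarith
  define a where "a = (u+S)/sg^2"
  define b where "b = (S-u)/sg^2"
  have a: "a > 0" unfolding a_def using Su sg2 by (simp add: abs_less_iff)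
  have b: "b > 0" unfolding b_def using Su sg2 by (simp add: abs_less_iff)
  have th1: "theta1 mu sg q cbar = a" unfolding theta1_def a_def u_def S_def by simp
  have th2: "theta2 mu sg q cbar = -b" unfolding theta2_def b_def u_def S_def by (simp add: minus_divide_left)
  have dder: "(theta2 mu sg q has_real_derivative (1 - u/S)/sg^2) (at cbar)"
  proof -
    have argpos: "(cbar-mu)^2 + 2*q * sg^2 > 0" using qs by (simp add: add_nonneg_pos)
    then have sq: "sqrt ((cbar-mu)^2 + 2*q * sg^2) > 0" by simp
    have eq: "\<And>T. T > 0 \<Longrightarrow> (1 - inverse T * (2 * cbar - 2 * mu) / 2) * sg\<^sup>2 / sg ^ 4 = (1 - (cbar - mu) / T) / sg\<^sup>2"
      using sg by (simp add: inverse_eq_divide field_simps)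
    show ?thesis
      unfolding theta2_def[abs_def] u_def S_def using argpos
      apply (auto intro!: derivative_eq_intros)
      using sg apply simp
      by (rule eq[OF sq])
  qed
  have d: "deriv (theta2 mu sg q) cbar = b/S"
    using DERIV_imp_deriv[OF dder] unfolding b_def using Spos sg2 by (simp add: field_simps)
  have cpos: "cbar > 0" using cb mu sg q by (smt (verit) divide_pos_pos mult_pos_pos zero_less_power)
  define k where "k = cbar * (b/S)"
  have k: "k > 0" unfolding k_def using cpos b Spos by simp
  have S_lt: "S < cbar + mu"
  proof -
    have "cbar * (2*mu) > q * sg^2" using cb mu by (simp add: field_simps)
    then have "S^2 < (cbar + mu)^2" unfolding S2 u_def by (simp add: power2_eq_square algebra_simps)
    then show ?thesis using cpos mu by (smt (verit) power_less_imp_less_base)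
  qed
  have alt: "a < 2*cbar/sg^2" unfolding a_def using S_lt sg2 u_def by (simp add: divide_strict_right_mono)
  have abk: "(a+b)*k = (2*cbar/sg^2)*b"
    unfolding a_def b_def k_def using Spos sg2 by (simp add: field_simps)
  have key: "a*b < (a+b)*k" unfolding abk using mult_strict_right_mono[OF alt b] by simp
  have ab0: "a + b > 0" using a b by simp
  define G where "G = (\<lambda>x. (1 + k*x - exp(b*x))/(q*(exp((a+b)*x)-1)))"
  define R where "R = (\<lambda>x. Ff a b k x/(q*(exp((a+b)*x)-1)^2))"
  have b0G: "b0 mu sg q x cbar = G x" if x: "x > 0" for x
  proof -
    have e1: "exp(-b*x) = 1/exp(b*x)" by (simp add: exp_minus inverse_eq_divide)
    have AE: "exp(a*x)*exp(b*x) - 1 \<noteq> 0"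
    proof -
      have "exp(a*x)*exp(b*x) = exp((a+b)*x)" by (simp add: exp_ab)
      moreover have "exp((a+b)*x) > 1" using ab0 x by simp
      ultimately show ?thesis using ab0 x by simp
    qed
    show ?thesis unfolding b0_def th1 th2 d G_def k_def exp_ab e1
      using b0_alg[of "exp(b*x)" "exp(a*x)" q cbar "b/S" x] AE q by (simp add: mult.assoc)
  qed
  have Rder: "((\<lambda>y. b0 mu sg q y cbar) has_real_derivative R x) (at x)" if x: "x > 0" for x
  proof (rule has_field_derivative_transform_within_open[where S="{0<..}"])
    show "(G has_real_derivative R x) (at x)" unfolding G_def R_def by (rule G_deriv[OF ab0 q x])
  qed (use x b0G in auto)
  have Dx: "deriv (\<lambda>y. b0 mu sg q y cbar) x = R x" if "x > 0" for x
    using Rder[OF that] by (rule DERIV_imp_deriv)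
  have hpos: "q*(exp((a+b)*x)-1)^2 > 0" if "x > 0" for x using that ab0 q by simp
  obtain z where z: "z > 0" "Ff a b k z = 0" "\<forall>x. 0 < x \<and> x < z \<longrightarrow> Ff a b k x < 0"
      "\<forall>x. x > z \<longrightarrow> Ff a b k x > 0" "exp(b*z) * Pf a b k z > 0"
    using core_signs[OF a b k key] by blast
  have Rneg: "R x < 0" if "0 < x" "x < z" for x
    unfolding R_def using z(3) that hpos[of x] by (simp add: divide_neg_pos)
  have Rpos: "R x > 0" if "x > z" for x
    unfolding R_def using z(4) that hpos[of x] z(1) by simp
  have Rz: "R z = 0" unfolding R_def using z(2) by simp
  have uniq: "\<exists>!z. z > 0 \<and> deriv (\<lambda>x. b0 mu sg q x cbar) z = 0"
  proof (rule ex1I[of _ z])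
    show "z > 0 \<and> deriv (\<lambda>x. b0 mu sg q x cbar) z = 0" using z(1) Dx Rz by simp
  next
    fix y assume y: "y > 0 \<and> deriv (\<lambda>x. b0 mu sg q x cbar) y = 0"
    then have "R y = 0" using Dx[of y] by simp
    then show "y = z" using Rneg[of y] Rpos[of y] y by (cases y z rule: linorder_cases) auto
  qed
  define L where "L = F2 a b k 0 / 2 / (q*(a+b)^2)"
  have F20: "F2 a b k 0 = (a+b)*(a*b - (a+b)*k)"
    unfolding F2_def by (simp add: power2_eq_square power3_eq_cube algebra_simps)
  have Lneg: "L < 0" unfolding L_def F20 using ab0 key q
    by (simp add: divide_neg_pos mult_pos_neg)
  have Llim: "((\<lambda>x. deriv (\<lambda>y. b0 mu sg q y cbar) x) \<longlongrightarrow> L) (at_right 0)"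
    unfolding L_def
  proof (rule Lim_transform_eventually[OF core_limit[OF ab0 q, of k]])
    show "\<forall>\<^sub>F x in at_right 0. Ff a b k x / (q * (exp ((a + b) * x) - 1)\<^sup>2) = deriv (\<lambda>y. b0 mu sg q y cbar) x"
      using eventually_at_right_less[of "0::real"] by (rule eventually_mono) (simp add: Dx R_def)
  qed
  have DD: "((\<lambda>x. deriv (\<lambda>y. b0 mu sg q y cbar) x) has_real_derivative
        exp(b*z)*Pf a b k z/(q*(exp((a+b)*z)-1)^2)) (at z)"
  proof (rule has_field_derivative_transform_within_open[where S="{0<..}"])
    show "(R has_real_derivative exp(b*z)*Pf a b k z/(q*(exp((a+b)*z)-1)^2)) (at z)"
      unfolding R_def by (rule R_deriv[OF ab0 q z(1) z(2)])
  qed (use z(1) Dx in auto)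
  have DDpos: "deriv (\<lambda>x. deriv (\<lambda>y. b0 mu sg q y cbar) x) z > 0"
    unfolding DERIV_imp_deriv[OF DD] using z(5) hpos[OF z(1)] by simp
  have c1: "deriv (\<lambda>x. b0 mu sg q x cbar) z = 0" using Dx[OF z(1)] Rz by simp
  have c2: "\<forall>x. 0 < x \<and> x < z \<longrightarrow> deriv (\<lambda>y. b0 mu sg q y cbar) x < 0"
  proof (intro allI impI)
    fix x :: real assume "0 < x \<and> x < z"
    then show "deriv (\<lambda>y. b0 mu sg q y cbar) x < 0" using Dx[of x] Rneg[of x] by simp
  qed
  have c3: "\<forall>x. x > z \<longrightarrow> deriv (\<lambda>y. b0 mu sg q y cbar) x > 0"
  proof (intro allI impI)
    fix x :: real assume "x > z"
    then show "deriv (\<lambda>y. b0 mu sg q y cbar) x > 0" using Dx[of x] Rpos[of x] z(1) by simp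
  qed
  have c4: "\<exists>L. ((\<lambda>x. deriv (\<lambda>y. b0 mu sg q y cbar) x) \<longlongrightarrow> L) (at_right 0) \<and> L < 0"
    using Llim Lneg by blast
  show ?thesis
    using uniq z(1) c1 c2 c3 c4 DDpos by blast
qed

end
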